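(* Let $G$ be a group given by a presentation $\langle X \mid R\rangle$ in which $X$ is a (possibly infinite) set of generators, each $x\in X$ satisfies $x^2=e$ (i.e. the relations $x^2=e$ hold for all $x \in X$), and every relation in $R$ has even length. For $I\subseteq X$, let $G_I$ denote the subgroup of $G$ generated by $I$ and let $G^I=\{w\in G : l(wx)>l(w)\ \text{for all } x\in I\}$. Then every element $w\in G$ has a factorisation $w=ab$ with $a\in G^I$, $b\in G_I$ and $l(w)=l(a)+l(b)$.
   Context: For a group $G$ with presentation $\langle X\mid R\rangle$, every $w\in G$ can be written as $x_1^{a_1}\cdots x_r^{a_r}$ with $x_j\in X$, $a_j=\pm1$; the length $l(w)$ is the smallest such $r$, and a reduced expression of $w$ is an expression of $w$ as a product of $l(w)$ elements of $X\cup X^{-1}$. If a relation in $R$ has the form $u=v$ with $u,v$ in the free group $F(X)$, its length is the length of the word $uv^{-1}$ in $F(X)$. *)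

theory Defs
  imports Main
begin

text \<open>Words in the free group F(X): lists of letters; a letter (x, True) stands for x,
  (x, False) for x^{-1}.\<close>

type_synonym 'x letter = "'x \<times> bool"
type_synonym 'x word = "'x letter list"

definition inv_letter :: "'x letter \<Rightarrow> 'x letter" where
  "inv_letter l = (fst l, \<not> snd l)"

definition inv_word :: "'x word \<Rightarrow> 'x word" where
  "inv_word w = rev (map inv_letter w)"

definition word_over :: "'x set \<Rightarrow> 'x word \<Rightarrow> bool" where
  "word_over X w \<longleftrightarrow> fst ` set w \<subseteq> X"

inductive free_eq :: "'x word \<Rightarrow> 'x word \<Rightarrow> bool" where
  free_refl: "free_eq w w"
| free_sym: "free_eq u v \<Longrightarrow> free_eq v u"
| free_trans: "free_eq u v \<Longrightarrow> free_eq v w \<Longrightarrow> free_eq u w"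
| free_cancel: "free_eq (a @ [l, inv_letter l] @ b) (a @ b)"

definition free_length :: "'x word \<Rightarrow> nat" where
  "free_length w = (LEAST n. \<exists>u. free_eq u w \<and> length u = n)"

inductive pres_eq :: "'x set \<Rightarrow> ('x word \<times> 'x word) set \<Rightarrow> 'x word \<Rightarrow> 'x word \<Rightarrow> bool"
  for X R where
  pres_refl: "pres_eq X R w w"
| pres_sym: "pres_eq X R u v \<Longrightarrow> pres_eq X R v u"
| pres_trans: "pres_eq X R u v \<Longrightarrow> pres_eq X R v w \<Longrightarrow> pres_eq X R u w"
| pres_cancel: "pres_eq X R (a @ [l, inv_letter l] @ b) (a @ b)"
| pres_rel: "(u, v) \<in> R \<Longrightarrow> pres_eq X R (a @ u @ b) (a @ v @ b)"
| pres_inv: "x \<in> X \<Longrightarrow> pres_eq X R (a @ [(x, True), (x, True)] @ b) (a @ b)"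

definition glen :: "'x set \<Rightarrow> ('x word \<times> 'x word) set \<Rightarrow> 'x word \<Rightarrow> nat" where
  "glen X R w = (LEAST n. \<exists>u. word_over X u \<and> pres_eq X R u w \<and> length u = n)"

definition in_GI :: "'x set \<Rightarrow> ('x word \<times> 'x word) set \<Rightarrow> 'x set \<Rightarrow> 'x word \<Rightarrow> bool" where
  "in_GI X R I w \<longleftrightarrow> (\<exists>u. word_over I u \<and> pres_eq X R u w)"

definition in_GupI :: "'x set \<Rightarrow> ('x word \<times> 'x word) set \<Rightarrow> 'x set \<Rightarrow> 'x word \<Rightarrow> bool" where
  "in_GupI X R I w \<longleftrightarrow> (\<forall>x\<in>I. glen X R (w @ [(x, True)]) > glen X R w)"

end

theory Submission
  imports Defs
begin

lemma pres_app_left: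
  "pres_eq X R u v \<Longrightarrow> pres_eq X R (c @ u) (c @ v)"
proof (induction rule: pres_eq.induct)
  case (pres_cancel a l b)
  have "pres_eq X R ((c@a) @ [l, inv_letter l] @ b) ((c@a)@b)"
    by (rule pres_eq.pres_cancel)
  then show ?case by simp
next
  case (pres_rel u v a b)
  have "pres_eq X R ((c@a) @ u @ b) ((c@a) @ v @ b)"
    by (rule pres_eq.pres_rel) fact
  then show ?case by simp
next
  case (pres_inv x a b)
  have "pres_eq X R ((c@a) @ [(x,True),(x,True)] @ b) ((c@a)@b)"
    by (rule pres_eq.pres_inv) fact
  then show ?case by simp
qed (auto intro: pres_eq.intros)

lemma pres_app_right:
  "pres_eq X R u v \<Longrightarrow> pres_eq X R (u @ c) (v @ c)"
proof (induction rule: pres_eq.induct)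
  case (pres_cancel a l b)
  have "pres_eq X R (a @ [l, inv_letter l] @ (b@c)) (a@(b@c))"
    by (rule pres_eq.pres_cancel)
  then show ?case by simp
next
  case (pres_rel u v a b)
  have "pres_eq X R (a @ u @ (b@c)) (a @ v @ (b@c))"
    by (rule pres_eq.pres_rel) fact
  then show ?case by simp
next
  case (pres_inv x a b)
  have "pres_eq X R (a @ [(x,True),(x,True)] @ (b@c)) (a@(b@c))"
    by (rule pres_eq.pres_inv) fact
  then show ?case by simp
qed (auto intro: pres_eq.intros)

lemma pres_app:
  "pres_eq X R u u' \<Longrightarrow> pres_eq X R v v' \<Longrightarrow> pres_eq X R (u @ v) (u' @ v')"
  by (meson pres_app_left pres_app_right pres_trans)

lemma free_parity: "free_eq u v \<Longrightarrow> even (length u + length v)"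
  by (induction rule: free_eq.induct) auto

lemma rel_parity:
  assumes "even (free_length (u @ inv_word v))"
  shows "even (length u + length v)"
proof -
  have ex: "\<exists>u'. free_eq u' (u @ inv_word v) \<and> length u' = length (u @ inv_word v)"
    using free_refl by blast
  have ex2: "\<exists>n. \<exists>u'. free_eq u' (u @ inv_word v) \<and> length u' = n" using ex by blast
  from LeastI_ex[OF ex2] obtain u' where
    "free_eq u' (u @ inv_word v)" "length u' = free_length (u @ inv_word v)"
    unfolding free_length_def by blast
  then have "even (length u' + length (u @ inv_word v))" using free_parity by blast
  then show ?thesis using assms \<open>length u' = _\<close> by (simp add: inv_word_def)
qed

lemma pres_parity:
  assumes "\<forall>(u, v)\<in>R. even (free_length (u @ inv_word v))"
  shows "pres_eq X R u v \<Longrightarrow> even (length u + length v)"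
proof (induction rule: pres_eq.induct)
  case (pres_rel u v a b)
  then have "even (length u + length v)" using assms rel_parity by fastforce
  then show ?case by simp
qed auto

lemma glen_ex:
  assumes "word_over X w"
  shows "\<exists>u. word_over X u \<and> pres_eq X R u w \<and> length u = glen X R w"
proof -
  have "\<exists>u. word_over X u \<and> pres_eq X R u w \<and> length u = length w"
    using assms pres_refl by blast
  then have "\<exists>n. \<exists>u. word_over X u \<and> pres_eq X R u w \<and> length u = n" by blast
  from LeastI_ex[OF this] show ?thesis unfolding glen_def by blast
qed

lemma glen_le:
  "word_over X u \<Longrightarrow> pres_eq X R u w \<Longrightarrow> glen X R w \<le> length u"
  unfolding glen_def by (rule Least_le) blast

lemma glen_cong:
  assumes "pres_eq X R v w" shows "glen X R v = glen X R w"
proof -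
  have "\<And>u. pres_eq X R u v \<longleftrightarrow> pres_eq X R u w"
    using assms by (meson pres_sym pres_trans)
  then show ?thesis unfolding glen_def by simp
qed

lemma word_over_app[simp]: "word_over X (u @ v) \<longleftrightarrow> word_over X u \<and> word_over X v"
  unfolding word_over_def by auto

lemma word_over_single[simp]: "word_over X [(x, b)] \<longleftrightarrow> x \<in> X"
  unfolding word_over_def by auto

lemma glen_parity:
  assumes "\<forall>(u, v)\<in>R. even (free_length (u @ inv_word v))" "word_over X w"
  shows "even (glen X R w + length w)"
  using glen_ex[OF assms(2), of R] pres_parity[OF assms(1)] by fastforce

lemma glen_app:
  assumes "word_over X u" "word_over X v"
  shows "glen X R (u @ v) \<le> glen X R u + glen X R v"
proof -
  obtain u' where u': "word_over X u'" "pres_eq X R u' u" "length u' = glen X R u"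
    using glen_ex[OF assms(1)] by blast
  obtain v' where v': "word_over X v'" "pres_eq X R v' v" "length v' = glen X R v"
    using glen_ex[OF assms(2)] by blast
  have "glen X R (u @ v) \<le> length (u' @ v')"
    by (rule glen_le) (use u' v' pres_app in auto)
  then show ?thesis using u' v' by simp
qed

lemma glen_single: "x \<in> X \<Longrightarrow> glen X R [(x, True)] \<le> 1"
  using glen_le[of X "[(x, True)]" R "[(x, True)]"] pres_refl by fastforce

lemma glen_nil: "glen X R [] = 0"
  using glen_le[of X "[]" R "[]"] pres_refl by (fastforce simp: word_over_def)

lemma glen_snoc_ge:
  assumes "x \<in> X" "word_over X a"
  shows "glen X R a \<le> glen X R (a @ [(x, True)]) + 1"
proof -
  have "pres_eq X R ((a @ [(x, True)]) @ [(x, True)]) a"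
    using pres_inv[OF assms(1), where R=R and a=a and b="[]"] by simp
  then have "glen X R a = glen X R ((a @ [(x, True)]) @ [(x, True)])"
    using glen_cong by metis
  also have "\<dots> \<le> glen X R (a @ [(x, True)]) + glen X R [(x, True)]"
    by (rule glen_app) (use assms in auto)
  finally show ?thesis using glen_single[OF assms(1), of R] by linarith
qed

theorem proposition2p2:
  fixes X :: "'x set" and R :: "('x word \<times> 'x word) set" and I :: "'x set" and w :: "'x word"
  assumes "\<forall>(u, v)\<in>R. word_over X u \<and> word_over X v"
    and "\<forall>(u, v)\<in>R. even (free_length (u @ inv_word v))"
    and "I \<subseteq> X"
    and "word_over X w"
  shows "\<exists>a b. word_over X a \<and> word_over X b \<and> in_GupI X R I a \<and> in_GI X R I b
           \<and> pres_eq X R w (a @ b) \<and> glen X R w = glen X R a + glen X R b"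
proof -
  define P where "P = (\<lambda>(a, b). word_over X a \<and> word_over X b \<and> in_GI X R I b
           \<and> pres_eq X R w (a @ b) \<and> glen X R w = glen X R a + glen X R b)"
  have "P (w, [])" unfolding P_def in_GI_def
    using assms(4) by (auto simp: glen_nil word_over_def intro!: exI[of _ "[]"] pres_refl)
  from ex_has_least_nat[of P "(w, [])" "\<lambda>(a, b). glen X R a", OF this]
  obtain a b where ab: "P (a, b)" and minab: "\<And>a' b'. P (a', b') \<Longrightarrow> glen X R a \<le> glen X R a'"
    by fastforce
  have aX: "word_over X a" and bX: "word_over X b" and bI: "in_GI X R I b"
    and wab: "pres_eq X R w (a @ b)" and len: "glen X R w = glen X R a + glen X R b"
    using ab unfolding P_def by auto
  have "in_GupI X R I a"
    unfolding in_GupI_def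
  proof
    fix x assume xI: "x \<in> I"
    then have xX: "x \<in> X" using assms(3) by auto
    let ?a = "a @ [(x, True)]" and ?b = "[(x, True)] @ b"
    show "glen X R a < glen X R ?a"
    proof (rule ccontr)
      assume "\<not> ?thesis"
      moreover have "even (glen X R a + length a)" using glen_parity[OF assms(2) aX] .
      moreover have "even (glen X R ?a + length ?a)" using glen_parity[OF assms(2)] aX xX by simp
      moreover have "glen X R a \<le> glen X R ?a + 1" using glen_snoc_ge[OF xX aX] .
      ultimately have lt: "glen X R ?a + 1 = glen X R a"
        by (cases "glen X R a = glen X R ?a") auto
      have "pres_eq X R (?a @ ?b) (a @ b)"
        using pres_inv[OF xX, where R=R and a=a and b=b] by simp
      then have wab': "pres_eq X R w (?a @ ?b)" using wab by (meson pres_sym pres_trans)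
      from bI obtain u where u: "word_over I u" "pres_eq X R u b" unfolding in_GI_def by blast
      have bI': "in_GI X R I ?b" unfolding in_GI_def
        using u xI pres_app_left[OF u(2), of "[(x, True)]"]
        by (intro exI[of _ "[(x, True)] @ u"]) (auto simp: word_over_def)
      have "glen X R w = glen X R (?a @ ?b)" using glen_cong[OF wab'] .
      also have "\<dots> \<le> glen X R ?a + glen X R ?b" by (rule glen_app) (use aX bX xX in \<open>auto simp: word_over_def\<close>)
      finally have le1: "glen X R w \<le> glen X R ?a + glen X R ?b" .
      have "glen X R ?b \<le> glen X R [(x, True)] + glen X R b"
        by (rule glen_app) (use bX xX in auto)
      then have "glen X R ?b \<le> glen X R b + 1" using glen_single[OF xX, of R] by linarith
      then have "glen X R w = glen X R ?a + glen X R ?b" using le1 len lt by linarith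
      then have "P (?a, ?b)" unfolding P_def using aX bX xX bI' wab' by (auto simp: word_over_def)
      then have "glen X R a \<le> glen X R ?a" by (rule minab)
      then show False using lt by linarith
    qed
  qed
  then show ?thesis using aX bX bI wab len by blast
qed

end
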